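(* For all positive integers $d$ and $k$ and every finite graph $G$ with $\alpha^{\ast}(G)\le d$ and $\mathsf{rw}(G)\le k$, we have $\alpha\text{-}\mathsf{tw}(G)\le 3dk$.
   Context: $\alpha^{\ast}(G)=\max_{v}\alpha(G[N[v]])$ (local independence number). $\alpha\text{-}\mathsf{tw}(G)$ is the minimum, over all tree-decompositions $(T,\beta)$ of $G$, of $\max_t\alpha(G[\beta(t)])$. For $X\subseteq V(G)$, the cutrank of $X$ is the $\mathbb{F}_2$-rank of the submatrix of the adjacency matrix with rows $X$ and columns $V(G)\setminus X$. A rank-decomposition of $G$ is a pair $(T,\delta)$ with $T$ a tree whose internal nodes have degree $3$ and $\delta$ a bijection from the leaves of $T$ to $V(G)$; each edge $e$ of $T$ splits the leaves into two sides, and its cutrank is the cutrank of the image under $\delta$ of one side. The width is the maximum cutrank of an edge of $T$, and the rankwidth $\mathsf{rw}(G)$ is the minimum width of a rank-decomposition. *)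

theory Defs
  imports Main
begin

definition graph :: "'a set \<Rightarrow> ('a \<Rightarrow> 'a \<Rightarrow> bool) \<Rightarrow> bool" where
  "graph V E \<longleftrightarrow> finite V \<and> (\<forall>u v. E u v \<longrightarrow> E v u) \<and> (\<forall>v. \<not> E v v)
     \<and> (\<forall>u v. E u v \<longrightarrow> u \<in> V \<and> v \<in> V)"

definition independent :: "('a \<Rightarrow> 'a \<Rightarrow> bool) \<Rightarrow> 'a set \<Rightarrow> bool" where
  "independent E S \<longleftrightarrow> (\<forall>u\<in>S. \<forall>v\<in>S. \<not> E u v)"

definition alpha :: "('a \<Rightarrow> 'a \<Rightarrow> bool) \<Rightarrow> 'a set \<Rightarrow> nat" where
  "alpha E X = Max {card S | S. S \<subseteq> X \<and> independent E S}"

definition closed_nbhd :: "('a \<Rightarrow> 'a \<Rightarrow> bool) \<Rightarrow> 'a \<Rightarrow> 'a set" where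
  "closed_nbhd E v = insert v {u. E v u}"

definition local_alpha :: "'a set \<Rightarrow> ('a \<Rightarrow> 'a \<Rightarrow> bool) \<Rightarrow> nat" where
  "local_alpha V E = Max (insert 0 {alpha E (closed_nbhd E v) | v. v \<in> V})"

text \<open>Finite trees with node set N (a finite nonempty set of naturals) and adjacency A:
  connected, and every edge is a bridge (acyclic).\<close>
definition is_tree :: "nat set \<Rightarrow> (nat \<Rightarrow> nat \<Rightarrow> bool) \<Rightarrow> bool" where
  "is_tree N A \<longleftrightarrow> finite N \<and> N \<noteq> {} \<and> (\<forall>x y. A x y \<longrightarrow> A y x) \<and> (\<forall>x. \<not> A x x)
     \<and> (\<forall>x y. A x y \<longrightarrow> x \<in> N \<and> y \<in> N)
     \<and> (\<forall>x\<in>N. \<forall>y\<in>N. A\<^sup>*\<^sup>* x y)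
     \<and> (\<forall>x y. A x y \<longrightarrow> \<not> (\<lambda>u v. A u v \<and> {u, v} \<noteq> {x, y})\<^sup>*\<^sup>* x y)"

definition tree_decomposition ::
  "'a set \<Rightarrow> ('a \<Rightarrow> 'a \<Rightarrow> bool) \<Rightarrow> nat set \<Rightarrow> (nat \<Rightarrow> nat \<Rightarrow> bool) \<Rightarrow> (nat \<Rightarrow> 'a set) \<Rightarrow> bool" where
  "tree_decomposition V E N A \<beta> \<longleftrightarrow> is_tree N A
     \<and> (\<forall>t\<in>N. \<beta> t \<subseteq> V)
     \<and> (\<forall>v\<in>V. \<exists>t\<in>N. v \<in> \<beta> t)
     \<and> (\<forall>u v. E u v \<longrightarrow> (\<exists>t\<in>N. u \<in> \<beta> t \<and> v \<in> \<beta> t))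
     \<and> (\<forall>v\<in>V. \<forall>s\<in>N. \<forall>t\<in>N. v \<in> \<beta> s \<longrightarrow> v \<in> \<beta> t \<longrightarrow>
           (\<lambda>x y. A x y \<and> v \<in> \<beta> x \<and> v \<in> \<beta> y)\<^sup>*\<^sup>* s t)"

definition alpha_width :: "('a \<Rightarrow> 'a \<Rightarrow> bool) \<Rightarrow> nat set \<Rightarrow> (nat \<Rightarrow> 'a set) \<Rightarrow> nat" where
  "alpha_width E N \<beta> = Max {alpha E (\<beta> t) | t. t \<in> N}"

definition alpha_tw :: "'a set \<Rightarrow> ('a \<Rightarrow> 'a \<Rightarrow> bool) \<Rightarrow> nat" where
  "alpha_tw V E = (LEAST w. \<exists>N A \<beta>. tree_decomposition V E N A \<beta> \<and> alpha_width E N \<beta> = w)"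

text \<open>Cutrank of X: the GF(2)-rank of the adjacency submatrix with rows X and columns V - X,
  i.e. the maximum number of GF(2)-linearly independent rows; a set S of rows is linearly
  independent over GF(2) iff no nonempty subset T of S sums to the zero vector, i.e. for
  every nonempty T some column y has an odd number of ones in the rows of T.\<close>
definition cutrank :: "'a set \<Rightarrow> ('a \<Rightarrow> 'a \<Rightarrow> bool) \<Rightarrow> 'a set \<Rightarrow> nat" where
  "cutrank V E X = Max {card S | S. S \<subseteq> X \<and>
      (\<forall>T. T \<subseteq> S \<longrightarrow> T \<noteq> {} \<longrightarrow> (\<exists>y \<in> V - X. odd (card {x \<in> T. E x y})))}"

definition tdegree :: "nat set \<Rightarrow> (nat \<Rightarrow> nat \<Rightarrow> bool) \<Rightarrow> nat \<Rightarrow> nat" where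
  "tdegree N A t = card {s \<in> N. A t s}"

definition leaves :: "nat set \<Rightarrow> (nat \<Rightarrow> nat \<Rightarrow> bool) \<Rightarrow> nat set" where
  "leaves N A = {t \<in> N. tdegree N A t \<le> 1}"

definition edge_side :: "(nat \<Rightarrow> nat \<Rightarrow> bool) \<Rightarrow> nat \<Rightarrow> nat \<Rightarrow> nat set" where
  "edge_side A s t = {u. (\<lambda>x y. A x y \<and> {x, y} \<noteq> {s, t})\<^sup>*\<^sup>* s u}"

definition rank_decomposition ::
  "'a set \<Rightarrow> nat set \<Rightarrow> (nat \<Rightarrow> nat \<Rightarrow> bool) \<Rightarrow> (nat \<Rightarrow> 'a) \<Rightarrow> bool" where
  "rank_decomposition V N A \<delta> \<longleftrightarrow> is_tree N A
     \<and> (\<forall>t\<in>N. tdegree N A t \<le> 1 \<or> tdegree N A t = 3)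
     \<and> bij_betw \<delta> (leaves N A) V"

definition rank_width_of ::
  "'a set \<Rightarrow> ('a \<Rightarrow> 'a \<Rightarrow> bool) \<Rightarrow> nat set \<Rightarrow> (nat \<Rightarrow> nat \<Rightarrow> bool) \<Rightarrow> (nat \<Rightarrow> 'a) \<Rightarrow> nat" where
  "rank_width_of V E N A \<delta> =
     Max (insert 0 {cutrank V E (\<delta> ` (leaves N A \<inter> edge_side A s t)) | s t. A s t})"

definition rankwidth :: "'a set \<Rightarrow> ('a \<Rightarrow> 'a \<Rightarrow> bool) \<Rightarrow> nat" where
  "rankwidth V E = (LEAST k. \<exists>N A \<delta>. rank_decomposition V N A \<delta> \<and> rank_width_of V E N A \<delta> = k)"

end

theory Submission
  imports Defs
begin

definition Rx :: "(nat \<Rightarrow> nat \<Rightarrow> bool) \<Rightarrow> nat \<Rightarrow> nat \<Rightarrow> nat \<Rightarrow> nat \<Rightarrow> bool" where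
  "Rx A s t = (\<lambda>x y. A x y \<and> {x, y} \<noteq> {s, t})"

lemma edge_side_Rx: "edge_side A s t = {u. (Rx A s t)\<^sup>*\<^sup>* s u}"
  by (simp add: edge_side_def Rx_def)

lemma Rx_sym: "Rx A s t = Rx A t s"
  by (intro ext) (simp add: Rx_def insert_commute)

lemma rtranclp_sym:
  assumes "\<And>x y. r x y \<Longrightarrow> r y x" and "r\<^sup>*\<^sup>* a b"
  shows "r\<^sup>*\<^sup>* b a"
  using assms(2)
proof (induction rule: rtranclp_induct)
  case base then show ?case by simp
next
  case (step y z)
  then show ?case using assms(1) by (meson converse_rtranclp_into_rtranclp)
qed

lemma tree_sym: "is_tree N A \<Longrightarrow> A x y \<Longrightarrow> A y x"
  unfolding is_tree_def by blast

lemma tree_irrefl: "is_tree N A \<Longrightarrow> \<not> A x x"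
  unfolding is_tree_def by blast

lemma tree_in: "is_tree N A \<Longrightarrow> A x y \<Longrightarrow> x \<in> N \<and> y \<in> N"
  unfolding is_tree_def by blast

lemma Rx_symm: "is_tree N A \<Longrightarrow> Rx A s t x y \<Longrightarrow> Rx A s t y x"
  unfolding Rx_def by (auto dest: tree_sym simp: insert_commute)

lemma T1: "is_tree N A \<Longrightarrow> A s t \<Longrightarrow> \<not> (Rx A s t)\<^sup>*\<^sup>* s t"
  unfolding is_tree_def Rx_def by blast

lemma T1': "is_tree N A \<Longrightarrow> A s t \<Longrightarrow> t \<notin> edge_side A s t"
  using T1 edge_side_Rx by fastforce

lemma T3:
  assumes tr: "is_tree N A" and st: "A s t"
  shows "edge_side A s t \<inter> edge_side A t s = {}"
proof (rule ccontr)
  assume "edge_side A s t \<inter> edge_side A t s \<noteq> {}"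
  then obtain z where z1: "(Rx A s t)\<^sup>*\<^sup>* s z" and z2: "(Rx A s t)\<^sup>*\<^sup>* t z"
    unfolding edge_side_Rx using Rx_sym by fastforce
  have "(Rx A s t)\<^sup>*\<^sup>* z t" using rtranclp_sym[OF Rx_symm[OF tr] z2] .
  with z1 have "(Rx A s t)\<^sup>*\<^sup>* s t" by simp
  with T1[OF tr st] show False by simp
qed

lemma T4:
  assumes tr: "is_tree N A" and yx: "A y x" and yy': "A y y'" and ne: "y' \<noteq> x"
  shows "edge_side A y' y \<subseteq> edge_side A y x"
proof
  fix z assume "z \<in> edge_side A y' y"
  hence "(Rx A y' y)\<^sup>*\<^sup>* y' z" by (simp add: edge_side_Rx)
  hence "(Rx A y x)\<^sup>*\<^sup>* y z"
  proof (induction rule: rtranclp_induct)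
    case base
    have "y \<noteq> y'" using tr yy' tree_irrefl by metis
    have "Rx A y x y y'" unfolding Rx_def using yy' ne \<open>y \<noteq> y'\<close> by (auto simp: doubleton_eq_iff)
    then show ?case by simp
  next
    case (step a b)
    have y'y: "A y' y" using tr yy' tree_sym by metis
    show ?case
    proof (cases "{a, b} = {y, x}")
      case True
      hence "a = y \<or> b = y" by (auto simp: doubleton_eq_iff)
      moreover have "(Rx A y' y)\<^sup>*\<^sup>* y' b" using step by (meson rtranclp.rtrancl_into_rtrancl)
      ultimately have "(Rx A y' y)\<^sup>*\<^sup>* y' y" using step by auto
      with T1[OF tr y'y] show ?thesis by simp
    next
      case False
      then have "Rx A y x a b" using step(2) by (simp add: Rx_def)
      then show ?thesis using step(3) by (meson rtranclp.rtrancl_into_rtrancl)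
    qed
  qed
  thus "z \<in> edge_side A y x" by (simp add: edge_side_Rx)
qed

lemma T4_strict:
  assumes tr: "is_tree N A" and yx: "A y x" and yy': "A y y'"
  shows "y \<in> edge_side A y x" "y \<notin> edge_side A y' y"
  using T1'[OF tr tree_sym[OF tr yy']] by (auto simp: edge_side_Rx)

lemma T5:
  assumes tr: "is_tree N A" and t: "t \<in> N" and x: "x \<in> N" and ne: "x \<noteq> t"
  shows "\<exists>s'. A t s' \<and> x \<in> edge_side A s' t"
proof -
  have "A\<^sup>*\<^sup>* t x" using tr t x unfolding is_tree_def by blast
  hence "x \<noteq> t \<longrightarrow> (\<exists>s'. A t s' \<and> (Rx A s' t)\<^sup>*\<^sup>* s' x)"
  proof (induction rule: rtranclp_induct)
    case base then show ?case by simp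
  next
    case (step a b)
    show ?case
    proof
      assume bt: "b \<noteq> t"
      show "\<exists>s'. A t s' \<and> (Rx A s' t)\<^sup>*\<^sup>* s' b"
      proof (cases "a = t")
        case True then show ?thesis using step(2) by auto
      next
        case False
        then obtain s' where s': "A t s'" "(Rx A s' t)\<^sup>*\<^sup>* s' a" using step by auto
        have "{a, b} \<noteq> {s', t}" using False bt by (auto simp: doubleton_eq_iff)
        hence "Rx A s' t a b" using step(2) by (simp add: Rx_def)
        thus ?thesis using s' by (meson rtranclp.rtrancl_into_rtrancl)
      qed
    qed
  qed
  thus ?thesis using ne by (auto simp: edge_side_Rx)
qed

lemma T6:
  assumes tr: "is_tree N A" and st: "A s t"
  shows "edge_side A s t \<subseteq> N"
proof
  fix u assume "u \<in> edge_side A s t"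
  hence "(Rx A s t)\<^sup>*\<^sup>* s u" by (simp add: edge_side_Rx)
  thus "u \<in> N"
  proof (induction rule: rtranclp_induct)
    case base then show ?case using tree_in[OF tr st] by simp
  next
    case (step a b) then show ?case using tree_in[OF tr] by (auto simp: Rx_def)
  qed
qed


lemma dominating:
  assumes fin: "finite V" and XV: "X \<subseteq> V"
  shows "\<exists>S \<subseteq> X. card S \<le> cutrank V E X \<and> (\<forall>v \<in> V - X. (\<exists>y\<in>X. E y v) \<longrightarrow> (\<exists>s\<in>S. E s v))"
proof -
  define P where "P S \<longleftrightarrow> S \<subseteq> X \<and> (\<forall>T. T \<subseteq> S \<longrightarrow> T \<noteq> {} \<longrightarrow> (\<exists>y \<in> V - X. odd (card {x \<in> T. E x y})))" for S
  have finX: "finite X" using fin XV finite_subset by auto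
  have cr: "cutrank V E X = Max {card S | S. P S}" unfolding cutrank_def P_def by simp
  have finF: "finite {card S | S. P S}"
  proof -
    have "{card S | S. P S} \<subseteq> card ` Pow X" unfolding P_def by auto
    thus ?thesis using finX by (meson finite_Pow_iff finite_imageI finite_subset)
  qed
  have "P {}" unfolding P_def by auto
  hence ne: "{card S | S. P S} \<noteq> {}" by auto
  obtain S where PS: "P S" and cS: "card S = cutrank V E X"
    using Max_in[OF finF ne] cr by auto
  have SX: "S \<subseteq> X" using PS P_def by auto
  have finS: "finite S" using finX SX finite_subset by auto
  show ?thesis
  proof (intro exI[of _ S] conjI ballI impI)
    show "S \<subseteq> X" by (fact SX)
    show "card S \<le> cutrank V E X" using cS by simp
    fix v assume v: "v \<in> V - X" and "\<exists>y\<in>X. E y v"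
    then obtain y where y: "y \<in> X" "E y v" by auto
    show "\<exists>s\<in>S. E s v"
    proof (cases "y \<in> S")
      case True thus ?thesis using y by auto
    next
      case False
      have c: "card (insert y S) = card S + 1" using False finS by simp
      have nP: "\<not> P (insert y S)"
      proof
        assume "P (insert y S)"
        hence "card (insert y S) \<le> Max {card S | S. P S}" using Max_ge[OF finF] by blast
        thus False using c cr cS by simp
      qed
      then obtain T where T: "T \<subseteq> insert y S" "T \<noteq> {}" "\<forall>z \<in> V - X. even (card {x \<in> T. E x z})"
        using SX y unfolding P_def by auto
      have "y \<in> T"
      proof (rule ccontr)
        assume "y \<notin> T"
        hence "T \<subseteq> S" using T by auto
        thus False using PS T unfolding P_def by auto
      qed
      have finT: "finite T" using T finS finite_subset by auto
      have eq: "{x \<in> T. E x v} = insert y {x \<in> T - {y}. E x v}" using \<open>y \<in> T\<close> y by auto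
      have "card {x \<in> T. E x v} = Suc (card {x \<in> T - {y}. E x v})"
        unfolding eq using finT by (subst card_insert_disjoint) auto
      moreover have "even (card {x \<in> T. E x v})" using T v by auto
      ultimately have "odd (card {x \<in> T - {y}. E x v})" by simp
      hence "card {x \<in> T - {y}. E x v} \<noteq> 0" by (metis even_zero)
      then obtain x where "x \<in> T - {y}" "E x v"
        by (metis (mono_tags, lifting) Collect_empty_eq card.empty)
      thus ?thesis using T by auto
    qed
  qed
qed

lemma alpha_ge:
  assumes "finite C" "J \<subseteq> C" "independent E J"
  shows "card J \<le> alpha E C"
proof -
  have "finite {card S |S. S \<subseteq> C \<and> independent E S}"
    by (rule finite_subset[of _ "card ` Pow C"]) (auto simp: assms)
  thus ?thesis unfolding alpha_def using assms by (intro Max_ge) auto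
qed

lemma alpha_le:
  assumes "finite C" "\<And>J. J \<subseteq> C \<Longrightarrow> independent E J \<Longrightarrow> card J \<le> m"
  shows "alpha E C \<le> m"
proof -
  have fin: "finite {card S |S. S \<subseteq> C \<and> independent E S}"
    by (rule finite_subset[of _ "card ` Pow C"]) (auto simp: assms)
  have ne: "{card S |S. S \<subseteq> C \<and> independent E S} \<noteq> {}"
  proof -
    have "0 \<in> {card S |S. S \<subseteq> C \<and> independent E S}"
      by (rule CollectI, rule exI[of _ "{}"]) (simp add: independent_def)
    thus ?thesis by blast
  qed
  show ?thesis unfolding alpha_def using assms by (subst Max_le_iff[OF fin ne]) auto
qed

lemma independent_subset: "independent E I \<Longrightarrow> J \<subseteq> I \<Longrightarrow> independent E J"
  unfolding independent_def by blast

lemma closed_nbhd_sub: "graph V E \<Longrightarrow> x \<in> V \<Longrightarrow> closed_nbhd E x \<subseteq> V"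
  unfolding graph_def closed_nbhd_def by auto

lemma local_bound:
  assumes g: "graph V E" and la: "local_alpha V E \<le> d" and x: "x \<in> V"
    and J: "J \<subseteq> closed_nbhd E x" "independent E J"
  shows "card J \<le> d"
proof -
  have finV: "finite V" using g graph_def by auto
  have fc: "finite (closed_nbhd E x)" using closed_nbhd_sub[OF g x] finV finite_subset by auto
  have "card J \<le> alpha E (closed_nbhd E x)" using alpha_ge[OF fc J] .
  also have "\<dots> \<le> local_alpha V E"
  proof -
    have "finite {alpha E (closed_nbhd E v) | v. v \<in> V}" using finV by simp
    thus ?thesis unfolding local_alpha_def using x by (intro Max_ge) auto
  qed
  finally show ?thesis using la by simp
qed

lemma union_bound:
  assumes g: "graph V E" and la: "local_alpha V E \<le> d" and U: "finite U" "U \<subseteq> V"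
    and I: "independent E I" "I \<subseteq> (\<Union>x\<in>U. closed_nbhd E x)"
  shows "card I \<le> card U * d"
proof -
  have e: "I = (\<Union>x\<in>U. I \<inter> closed_nbhd E x)" using I by auto
  have "card I = card (\<Union>x\<in>U. I \<inter> closed_nbhd E x)" by (rule arg_cong[OF e])
  also have "\<dots> \<le> (\<Sum>x\<in>U. card (I \<inter> closed_nbhd E x))" using card_UN_le[OF U(1)] .
  also have "\<dots> \<le> card U * d"
  proof -
    have "\<forall>x\<in>U. card (I \<inter> closed_nbhd E x) \<le> d"
    proof
      fix x assume "x \<in> U"
      hence xV: "x \<in> V" using U(2) by auto
      show "card (I \<inter> closed_nbhd E x) \<le> d"
        by (rule local_bound[OF g la xV]) (auto intro: independent_subset[OF I(1)])
    qed
    thus ?thesis using sum_bounded_above[of U "\<lambda>x. card (I \<inter> closed_nbhd E x)" d] by simp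
  qed
  finally show ?thesis .
qed


lemma funpow_le: "(\<forall>x. p x \<le> (x::nat)) \<Longrightarrow> (p ^^ j) z \<le> z"
  by (induction j) (auto intro: le_trans)

lemma parent_tree:
  fixes p :: "nat \<Rightarrow> nat"
  assumes fin: "finite N" and z: "0 \<in> N" and pN: "\<forall>x\<in>N. p x \<in> N"
    and ple: "\<forall>x. p x \<le> x" and plt: "\<forall>x. x \<noteq> 0 \<longrightarrow> p x < x"
    and Adef: "A = (\<lambda>x y. x \<in> N \<and> y \<in> N \<and> ((x \<noteq> 0 \<and> y = p x) \<or> (y \<noteq> 0 \<and> x = p y)))"
  shows "is_tree N A"
proof -
  have sym: "\<forall>x y. A x y \<longrightarrow> A y x" unfolding Adef by auto
  have irr: "\<forall>x. \<not> A x x"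
  proof (intro allI notI)
    fix x assume "A x x"
    hence "x \<noteq> 0" "x = p x" unfolding Adef by auto
    thus False using plt by (metis less_irrefl)
  qed
  have toz: "x \<in> N \<Longrightarrow> A\<^sup>*\<^sup>* x 0" for x
  proof (induction x rule: less_induct)
    case (less x)
    show ?case
    proof (cases "x = 0")
      case True then show ?thesis by simp
    next
      case False
      have "A x (p x)" unfolding Adef using less.prems pN False by auto
      moreover have "A\<^sup>*\<^sup>* (p x) 0" using less.IH[of "p x"] plt False pN less.prems by auto
      ultimately show ?thesis by (meson converse_rtranclp_into_rtranclp)
    qed
  qed
  have conn: "\<forall>x\<in>N. \<forall>y\<in>N. A\<^sup>*\<^sup>* x y"
  proof (intro ballI)
    fix x y assume "x \<in> N" "y \<in> N"
    have "A\<^sup>*\<^sup>* 0 y" using rtranclp_sym[of A, OF _ toz[OF \<open>y \<in> N\<close>]] sym by blast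
    thus "A\<^sup>*\<^sup>* x y" using toz[OF \<open>x \<in> N\<close>] by simp
  qed
  have anc: "(\<lambda>u v. A u v \<and> {u, v} \<noteq> {c, p c})\<^sup>*\<^sup>* c z \<Longrightarrow> \<exists>j. (p ^^ j) z = c" for c z
  proof (induction rule: rtranclp_induct)
    case base then show ?case by (auto intro: exI[of _ 0])
  next
    case (step a b)
    then obtain j where j: "(p ^^ j) a = c" by auto
    from step(2) have Aab: "A a b" and ne: "{a, b} \<noteq> {c, p c}" by auto
    show ?case
    proof (cases "b \<noteq> 0 \<and> a = p b")
      case True
      then show ?thesis using j by (metis funpow_Suc_right comp_apply)
    next
      case False
      then have "a \<noteq> 0" "b = p a" using Aab unfolding Adef by auto
      show ?thesis
      proof (cases j)
        case 0 then show ?thesis using j ne \<open>b = p a\<close> by auto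
      next
        case (Suc j')
        then have "(p ^^ j') b = c" using j \<open>b = p a\<close> by (metis funpow_Suc_right comp_apply)
        then show ?thesis by auto
      qed
    qed
  qed
  have nochild: "c \<noteq> 0 \<Longrightarrow> \<not> (\<lambda>u v. A u v \<and> {u, v} \<noteq> {c, p c})\<^sup>*\<^sup>* c (p c)" for c
  proof
    assume c: "c \<noteq> 0" and r: "(\<lambda>u v. A u v \<and> {u, v} \<noteq> {c, p c})\<^sup>*\<^sup>* c (p c)"
    obtain j where "(p ^^ j) (p c) = c" using anc[OF r] by auto
    moreover have "(p ^^ j) (p c) \<le> p c" using funpow_le ple by blast
    moreover have "p c < c" using plt c by blast
    ultimately show False by linarith
  qed
  have bridge: "\<forall>x y. A x y \<longrightarrow> \<not> (\<lambda>u v. A u v \<and> {u, v} \<noteq> {x, y})\<^sup>*\<^sup>* x y"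
  proof (intro allI impI)
    fix x y assume Axy: "A x y"
    show "\<not> (\<lambda>u v. A u v \<and> {u, v} \<noteq> {x, y})\<^sup>*\<^sup>* x y"
    proof (cases "x \<noteq> 0 \<and> y = p x")
      case True
      then have "x \<noteq> 0" "y = p x" by auto
      then show ?thesis using nochild[of x] by simp
    next
      case False
      then have y0: "y \<noteq> 0" and xp: "x = p y" using Axy unfolding Adef by auto
      show ?thesis
      proof
        assume r: "(\<lambda>u v. A u v \<and> {u, v} \<noteq> {x, y})\<^sup>*\<^sup>* x y"
        have rs: "\<And>u v. (\<lambda>u v. A u v \<and> {u, v} \<noteq> {x, y}) u v \<Longrightarrow> (\<lambda>u v. A u v \<and> {u, v} \<noteq> {x, y}) v u"
          using sym by (auto simp: insert_commute)
        have "(\<lambda>u v. A u v \<and> {u, v} \<noteq> {x, y})\<^sup>*\<^sup>* y x" using rtranclp_sym[OF rs r] .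
        moreover have "(\<lambda>u v. A u v \<and> {u, v} \<noteq> {x, y}) = (\<lambda>u v. A u v \<and> {u, v} \<noteq> {y, p y})"
          using xp by (simp add: insert_commute)
        ultimately show False using nochild[OF y0] xp by simp
      qed
    qed
  qed
  have inN: "\<forall>x y. A x y \<longrightarrow> x \<in> N \<and> y \<in> N" unfolding Adef by auto
  have ne: "N \<noteq> {}" using z by auto
  show ?thesis unfolding is_tree_def
    by (intro conjI; (fact fin | fact ne | fact sym | fact irr | fact inN | fact conn | fact bridge))
qed

definition pcat :: "nat \<Rightarrow> nat \<Rightarrow> nat" where
  "pcat m x = (if x \<le> m then x - 1 else if x \<le> 2*m then x - m else m)"

definition Acat :: "nat \<Rightarrow> nat \<Rightarrow> nat \<Rightarrow> bool" where
  "Acat m = (\<lambda>x y. x \<in> {..2*m+1} \<and> y \<in> {..2*m+1} \<and> ((x \<noteq> 0 \<and> y = pcat m x) \<or> (y \<noteq> 0 \<and> x = pcat m y)))"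

lemma cat_tree: "is_tree {..2*m+1} (Acat m)"
  by (rule parent_tree[where p = "pcat m"]) (auto simp: pcat_def Acat_def)

lemma nb0: "{s \<in> {..2*m+1}. Acat m 0 s} = {1}"
  by (auto simp: Acat_def pcat_def split: if_splits)

lemma nbmid: "1 \<le> x \<Longrightarrow> x \<le> m \<Longrightarrow> {s \<in> {..2*m+1}. Acat m x s} = {x - 1, x + m, if x < m then x + 1 else 2*m+1}"
  by (auto simp: Acat_def pcat_def split: if_splits)

lemma nbleaf: "m < x \<Longrightarrow> x \<le> 2*m+1 \<Longrightarrow> {s \<in> {..2*m+1}. Acat m x s} = {pcat m x}"
  by (auto simp: Acat_def pcat_def split: if_splits)

lemma card3: "1 \<le> (x::nat) \<Longrightarrow> x \<le> m \<Longrightarrow> card {x - 1, x + m, if x < m then x + 1 else 2*m+1} = 3"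
  by (cases "x < m") (auto simp: card_insert_if)

lemma cat_deg: "t \<in> {..2*m+1} \<Longrightarrow> tdegree {..2*m+1} (Acat m) t \<le> 1 \<or> tdegree {..2*m+1} (Acat m) t = 3"
  unfolding tdegree_def
proof -
  assume t: "t \<in> {..2*m+1}"
  consider "t = 0" | "1 \<le> t \<and> t \<le> m" | "m < t \<and> t \<le> 2*m+1" using t by force
  then show "card {s \<in> {..2*m+1}. Acat m t s} \<le> 1 \<or> card {s \<in> {..2*m+1}. Acat m t s} = 3"
  proof cases
    case 1 then show ?thesis using nb0 by simp
  next
    case 2 then show ?thesis using nbmid[of t m] card3[of t m] by simp
  next
    case 3 then show ?thesis using nbleaf[of m t] by simp
  qed
qed

lemma cat_leaves: "leaves {..2*m+1} (Acat m) = insert 0 {m<..2*m+1}"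
proof -
  have "t \<in> leaves {..2*m+1} (Acat m) \<longleftrightarrow> t \<in> insert 0 {m<..2*m+1}" for t
  proof -
    consider "t = 0" | "1 \<le> t \<and> t \<le> m" | "m < t \<and> t \<le> 2*m+1" | "t > 2*m+1" by force
    then show ?thesis
    proof cases
      case 1 then show ?thesis using nb0 by (simp add: leaves_def tdegree_def)
    next
      case 2 then show ?thesis using nbmid[of t m] card3[of t m] by (simp add: leaves_def tdegree_def)
    next
      case 3 then show ?thesis using nbleaf[of m t] by (simp add: leaves_def tdegree_def)
    next
      case 4 then show ?thesis by (simp add: leaves_def)
    qed
  qed
  thus ?thesis by (rule set_eqI)
qed

lemma rank_decomp_exists:
  assumes fin: "finite V" and c: "card V \<ge> 2"
  shows "\<exists>N A \<delta>. rank_decomposition V N A \<delta>"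
proof -
  define m where "m = card V - 2"
  have "card (insert 0 {m<..2*m+1}) = card V" using c by (simp add: m_def)
  then obtain h where h: "bij_betw h (insert 0 {m<..2*m+1}) V"
    using finite_same_card_bij[of "insert 0 {m<..2*m+1}" V] fin by auto
  have "rank_decomposition V {..2*m+1} (Acat m) h"
    unfolding rank_decomposition_def using cat_tree cat_deg cat_leaves h by auto
  thus ?thesis by blast
qed


locale rdctx =
  fixes V :: "'a set" and E :: "'a \<Rightarrow> 'a \<Rightarrow> bool" and N :: "nat set" and A :: "nat \<Rightarrow> nat \<Rightarrow> bool"
    and \<delta> :: "nat \<Rightarrow> 'a" and d k :: nat
  assumes g: "graph V E" and rd: "rank_decomposition V N A \<delta>"
    and rw: "rank_width_of V E N A \<delta> \<le> k" and la: "local_alpha V E \<le> d"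
    and kpos: "k > 0"
begin

definition Xs where "Xs s t = \<delta> ` (leaves N A \<inter> edge_side A s t)"
definition bag where "bag t = (if t \<in> leaves N A then closed_nbhd E (\<delta> t) else {})
   \<union> {v. \<exists>s. A t s \<and> v \<notin> Xs s t \<and> (\<exists>w \<in> Xs s t. E w v)}"
definition lf where "lf v = inv_into (leaves N A) \<delta> v"
definition RR where "RR v x y \<longleftrightarrow> A x y \<and> v \<in> bag x \<and> v \<in> bag y"

lemma tr: "is_tree N A" using rd rank_decomposition_def by auto
lemma deg: "t \<in> N \<Longrightarrow> tdegree N A t \<le> 1 \<or> tdegree N A t = 3" using rd unfolding rank_decomposition_def by blast
lemma bij: "bij_betw \<delta> (leaves N A) V" using rd rank_decomposition_def by auto
lemma finV: "finite V" using g graph_def by auto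
lemma finN: "finite N" using tr is_tree_def by auto
lemma leavesN: "leaves N A \<subseteq> N" by (auto simp: leaves_def)
lemma lf: "v \<in> V \<Longrightarrow> lf v \<in> leaves N A \<and> \<delta> (lf v) = v"
  using bij unfolding lf_def by (metis bij_betw_def f_inv_into_f inv_into_into)
lemma lf_delta: "l \<in> leaves N A \<Longrightarrow> lf (\<delta> l) = l"
  using bij unfolding lf_def bij_betw_def by (simp add: inv_into_f_f)
lemma delta_V: "l \<in> leaves N A \<Longrightarrow> \<delta> l \<in> V" using bij bij_betwE by blast
lemma Xs_V: "Xs s t \<subseteq> V" using delta_V Xs_def by auto
lemma notin_Xs: "lf v \<notin> edge_side A s t \<Longrightarrow> v \<notin> Xs s t"
  unfolding Xs_def using lf_delta by auto
lemma in_Xs: "l \<in> leaves N A \<Longrightarrow> l \<in> edge_side A s t \<Longrightarrow> \<delta> l \<in> Xs s t"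
  unfolding Xs_def by auto
lemma in_Xs_lf: "v \<in> V \<Longrightarrow> lf v \<in> edge_side A s t \<Longrightarrow> v \<in> Xs s t"
  using in_Xs lf by metis

lemma cut_le:
  assumes ts: "A t s"
  shows "cutrank V E (Xs s t) \<le> k"
proof -
  have st: "A s t" using tree_sym[OF tr ts] .
  let ?F = "{cutrank V E (\<delta> ` (leaves N A \<inter> edge_side A s t)) | s t. A s t}"
  have "?F \<subseteq> (\<lambda>(s,t). cutrank V E (\<delta> ` (leaves N A \<inter> edge_side A s t))) ` (N \<times> N)"
    using tree_in[OF tr] by fastforce
  hence "finite ?F" using finN by (meson finite_SigmaI finite_imageI finite_subset)
  hence "cutrank V E (Xs s t) \<le> Max (insert 0 ?F)" using st unfolding Xs_def by (intro Max_ge) auto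
  thus ?thesis using rw unfolding rank_width_of_def by simp
qed

lemma bag_V: "bag t \<subseteq> V"
proof -
  have "closed_nbhd E (\<delta> t) \<subseteq> V" if "t \<in> leaves N A"
    using closed_nbhd_sub[OF g delta_V[OF that]] .
  moreover have "v \<in> V" if "E w v" for w v using g that unfolding graph_def by blast
  ultimately show ?thesis unfolding bag_def by auto
qed

lemma bag_alpha:
  assumes t: "t \<in> N"
  shows "alpha E (bag t) \<le> 3 * d * k"
proof -
  define Nb where "Nb = {s \<in> N. A t s}"
  have finNb: "finite Nb" using finN Nb_def by auto
  have "\<forall>s\<in>Nb. \<exists>S. S \<subseteq> Xs s t \<and> card S \<le> k \<and> (\<forall>v\<in>V - Xs s t. (\<exists>y\<in>Xs s t. E y v) \<longrightarrow> (\<exists>x\<in>S. E x v))"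
  proof
    fix s assume "s \<in> Nb" hence ts: "A t s" by (simp add: Nb_def)
    from dominating[OF finV Xs_V[of s t], where E=E] obtain S where
      "S \<subseteq> Xs s t" "card S \<le> cutrank V E (Xs s t)"
      "\<forall>v\<in>V - Xs s t. (\<exists>y\<in>Xs s t. E y v) \<longrightarrow> (\<exists>x\<in>S. E x v)" by blast
    thus "\<exists>S. S \<subseteq> Xs s t \<and> card S \<le> k \<and> (\<forall>v\<in>V - Xs s t. (\<exists>y\<in>Xs s t. E y v) \<longrightarrow> (\<exists>x\<in>S. E x v))"
      using cut_le[OF ts] by (meson le_trans)
  qed
  then obtain f where f: "\<And>s. s \<in> Nb \<Longrightarrow> f s \<subseteq> Xs s t \<and> card (f s) \<le> k \<and>
      (\<forall>v\<in>V - Xs s t. (\<exists>y\<in>Xs s t. E y v) \<longrightarrow> (\<exists>x\<in>f s. E x v))" by metis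
  define U0 where "U0 = (\<Union>s\<in>Nb. f s)"
  define U where "U = U0 \<union> (if t \<in> leaves N A then {\<delta> t} else {})"
  have U0V: "U0 \<subseteq> V" unfolding U0_def using f Xs_V by blast
  have UV: "U \<subseteq> V" unfolding U_def using U0V delta_V by auto
  have finU: "finite U" using UV finV finite_subset by auto
  have finU0: "finite U0" using U0V finV finite_subset by auto
  have cU0: "card U0 \<le> card Nb * k"
  proof -
    have "card U0 \<le> (\<Sum>s\<in>Nb. card (f s))" unfolding U0_def by (rule card_UN_le[OF finNb])
    also have "\<dots> \<le> card Nb * k" using sum_bounded_above[of Nb "\<lambda>s. card (f s)" k] f by simp
    finally show ?thesis .
  qed
  have cNb: "card Nb = tdegree N A t" unfolding Nb_def tdegree_def by simp
  have cU: "card U \<le> 3 * k"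
  proof (cases "t \<in> leaves N A")
    case True
    hence "card Nb \<le> 1" using cNb by (simp add: leaves_def)
    hence "card U0 \<le> k" using cU0 by (metis le_trans mult_1 mult_le_mono1)
    moreover have "card U \<le> card U0 + 1" unfolding U_def using True finU0
      by (simp add: card_insert_if)
    ultimately show ?thesis using kpos by linarith
  next
    case False
    hence "tdegree N A t = 3" using deg[OF t] t by (auto simp: leaves_def)
    thus ?thesis using cU0 cNb False by (simp add: U_def)
  qed
  have cover: "bag t \<subseteq> (\<Union>x\<in>U. closed_nbhd E x)"
  proof
    fix v assume v: "v \<in> bag t"
    show "v \<in> (\<Union>x\<in>U. closed_nbhd E x)"
    proof (cases "t \<in> leaves N A \<and> v \<in> closed_nbhd E (\<delta> t)")
      case True
      then show ?thesis unfolding U_def by auto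
    next
      case False
      then obtain s w where s: "A t s" "v \<notin> Xs s t" "w \<in> Xs s t" "E w v"
        using v unfolding bag_def by (auto split: if_splits)
      have sNb: "s \<in> Nb" using s(1) tree_in[OF tr] Nb_def by auto
      have "v \<in> V" using bag_V v by auto
      then obtain x where "x \<in> f s" "E x v" using f[OF sNb] s by blast
      moreover have "x \<in> U" using \<open>x \<in> f s\<close> sNb unfolding U_def U0_def by auto
      ultimately show ?thesis unfolding closed_nbhd_def by auto
    qed
  qed
  have finbag: "finite (bag t)" by (rule finite_subset[OF bag_V finV])
  show ?thesis
  proof (rule alpha_le[OF finbag])
    fix J assume "J \<subseteq> bag t" "independent E J"
    hence "card J \<le> card U * d" using union_bound[OF g la finU UV] cover by blast
    also have "\<dots> \<le> 3 * k * d" using cU by simp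
    finally show "card J \<le> 3 * d * k" by (simp add: mult.commute mult.left_commute)
  qed
qed

lemma bagI: "A t s \<Longrightarrow> v \<notin> Xs s t \<Longrightarrow> w \<in> Xs s t \<Longrightarrow> E w v \<Longrightarrow> v \<in> bag t"
  unfolding bag_def by blast

lemma step_lemma:
  assumes v: "v \<in> V" and t: "t \<in> N" and ne: "t \<noteq> lf v"
  shows "\<exists>s'. A t s' \<and> lf v \<in> edge_side A s' t \<and> v \<notin> Xs t s'"
proof -
  have lfN: "lf v \<in> N" using lf[OF v] leavesN by auto
  obtain s' where s': "A t s'" "lf v \<in> edge_side A s' t" using T5[OF tr t lfN] ne by metis
  have "edge_side A s' t \<inter> edge_side A t s' = {}" using T3[OF tr tree_sym[OF tr s'(1)]] .
  hence "lf v \<notin> edge_side A t s'" using s'(2) by auto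
  thus ?thesis using s' notin_Xs by blast
qed

lemma M:
  "v \<in> V \<Longrightarrow> card (edge_side A t s) = n \<Longrightarrow> A t s \<Longrightarrow> v \<notin> Xs s t \<Longrightarrow> w \<in> Xs s t \<Longrightarrow> E w v
   \<Longrightarrow> (RR v)\<^sup>*\<^sup>* t (lf v)"
proof (induction n arbitrary: s t w rule: less_induct)
  case (less n)
  have ts: "A t s" by (rule less.prems(3))
  have vt: "v \<in> bag t" by (rule bagI[OF less.prems(3-6)])
  have tN: "t \<in> N" using tree_in[OF tr ts] by simp
  show ?case
  proof (cases "t = lf v")
    case True then show ?thesis by simp
  next
    case False
    obtain s' where s': "A t s'" "lf v \<in> edge_side A s' t" "v \<notin> Xs t s'"
      using step_lemma[OF less.prems(1) tN False] by blast
    have lfs: "lf v \<notin> edge_side A s t" using less.prems(4) in_Xs_lf[OF less.prems(1)] by blast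
    have ne: "s' \<noteq> s" using s'(2) lfs by auto
    have sub1: "edge_side A s t \<subseteq> edge_side A t s'" by (rule T4[OF tr s'(1) ts ne[symmetric]])
    have w': "w \<in> Xs t s'" using less.prems(5) sub1 unfolding Xs_def by auto
    have sub2: "edge_side A s' t \<subseteq> edge_side A t s" by (rule T4[OF tr ts s'(1) ne])
    have strict: "t \<in> edge_side A t s" "t \<notin> edge_side A s' t" using T4_strict[OF tr ts s'(1)] by auto
    have fin: "finite (edge_side A t s)" using T6[OF tr ts] finN finite_subset by auto
    have "edge_side A s' t \<subset> edge_side A t s" using sub2 strict by blast
    hence lt: "card (edge_side A s' t) < n" using psubset_card_mono[OF fin] less.prems(2) by blast
    have s't: "A s' t" using tree_sym[OF tr s'(1)] .
    have IH: "(RR v)\<^sup>*\<^sup>* s' (lf v)"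
      using less.IH[OF lt less.prems(1) refl s't s'(3) w' less.prems(6)] .
    have "v \<in> bag s'" by (rule bagI[OF s't s'(3) w' less.prems(6)])
    hence "RR v t s'" using vt s'(1) by (simp add: RR_def)
    thus ?thesis using IH by (meson converse_rtranclp_into_rtranclp)
  qed
qed

lemma to_leaf:
  assumes v: "v \<in> V" and t: "t \<in> N" and vb: "v \<in> bag t"
  shows "(RR v)\<^sup>*\<^sup>* t (lf v)"
proof (cases "t = lf v")
  case True then show ?thesis by simp
next
  case False
  show ?thesis
  proof (cases "\<exists>s. A t s \<and> v \<notin> Xs s t \<and> (\<exists>w \<in> Xs s t. E w v)")
    case True
    then obtain s w where "A t s" "v \<notin> Xs s t" "w \<in> Xs s t" "E w v" by blast
    then show ?thesis using M[OF v refl] by blast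
  next
    case nc: False
    hence tl: "t \<in> leaves N A" and vc: "v \<in> closed_nbhd E (\<delta> t)" using vb unfolding bag_def
      by (auto split: if_splits)
    have "v \<noteq> \<delta> t" using False lf_delta[OF tl] by auto
    hence E: "E (\<delta> t) v" using vc unfolding closed_nbhd_def by auto
    obtain s' where s': "A t s'" "lf v \<in> edge_side A s' t" "v \<notin> Xs t s'"
      using step_lemma[OF v t False] by blast
    have "t \<in> edge_side A t s'" by (simp add: edge_side_Rx)
    hence w: "\<delta> t \<in> Xs t s'" using in_Xs[OF tl] by blast
    have s't: "A s' t" using tree_sym[OF tr s'(1)] .
    have IH: "(RR v)\<^sup>*\<^sup>* s' (lf v)" using M[OF v refl s't s'(3) w E] .
    have "v \<in> bag s'" by (rule bagI[OF s't s'(3) w E])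
    hence "RR v t s'" using vb s'(1) by (simp add: RR_def)
    thus ?thesis using IH by (meson converse_rtranclp_into_rtranclp)
  qed
qed

lemma td: "tree_decomposition V E N A bag"
proof -
  have c2: "\<forall>v\<in>V. \<exists>t\<in>N. v \<in> bag t"
  proof
    fix v assume v: "v \<in> V"
    have "v \<in> bag (lf v)" using lf[OF v] unfolding bag_def closed_nbhd_def by auto
    thus "\<exists>t\<in>N. v \<in> bag t" using lf[OF v] leavesN by blast
  qed
  have c3: "\<forall>u v. E u v \<longrightarrow> (\<exists>t\<in>N. u \<in> bag t \<and> v \<in> bag t)"
  proof (intro allI impI)
    fix u v assume e: "E u v"
    hence u: "u \<in> V" using g unfolding graph_def by blast
    have "u \<in> bag (lf u) \<and> v \<in> bag (lf u)" using lf[OF u] e unfolding bag_def closed_nbhd_def by auto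
    thus "\<exists>t\<in>N. u \<in> bag t \<and> v \<in> bag t" using lf[OF u] leavesN by blast
  qed
  have c5: "\<forall>v\<in>V. \<forall>s\<in>N. \<forall>t\<in>N. v \<in> bag s \<longrightarrow> v \<in> bag t \<longrightarrow>
           (\<lambda>x y. A x y \<and> v \<in> bag x \<and> v \<in> bag y)\<^sup>*\<^sup>* s t"
  proof (intro ballI impI)
    fix v s t assume v: "v \<in> V" and s: "s \<in> N" and t: "t \<in> N" and vs: "v \<in> bag s" and vt: "v \<in> bag t"
    have RReq: "RR v = (\<lambda>x y. A x y \<and> v \<in> bag x \<and> v \<in> bag y)" by (intro ext) (simp add: RR_def)
    have symR: "\<And>x y. RR v x y \<Longrightarrow> RR v y x" unfolding RR_def using tree_sym[OF tr] by blast
    have "(RR v)\<^sup>*\<^sup>* s (lf v)" using to_leaf[OF v s vs] .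
    moreover have "(RR v)\<^sup>*\<^sup>* (lf v) t" using rtranclp_sym[OF symR to_leaf[OF v t vt]] .
    ultimately have "(RR v)\<^sup>*\<^sup>* s t" by simp
    thus "(\<lambda>x y. A x y \<and> v \<in> bag x \<and> v \<in> bag y)\<^sup>*\<^sup>* s t" using RReq by simp
  qed
  show ?thesis unfolding tree_decomposition_def
    using tr bag_V c2 c3 c5 by blast
qed

lemma width: "alpha_width E N bag \<le> 3 * d * k"
proof -
  have fin: "finite {alpha E (bag t) | t. t \<in> N}" using finN by simp
  have ne: "{alpha E (bag t) | t. t \<in> N} \<noteq> {}" using tr unfolding is_tree_def by auto
  show ?thesis unfolding alpha_width_def using bag_alpha by (subst Max_le_iff[OF fin ne]) auto
qed

end

theorem theorem8p2:
  fixes V :: "'a set" and E :: "'a \<Rightarrow> 'a \<Rightarrow> bool" and d k :: nat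
  assumes "d > 0" and "k > 0"
    and "graph V E"
    and "local_alpha V E \<le> d"
    and "rankwidth V E \<le> k"
  shows "alpha_tw V E \<le> 3 * d * k"
proof (cases "card V \<le> 1")
  case True
  have finV: "finite V" using assms(3) graph_def by auto
  have tr0: "is_tree {0} (\<lambda>_ _. False)" unfolding is_tree_def by auto
  have tdc: "tree_decomposition V E {0} (\<lambda>_ _. False) (\<lambda>_. V)"
    unfolding tree_decomposition_def using tr0 assms(3) unfolding graph_def by auto
  have dk: "1 \<le> 3 * d * k" using assms(1,2) by simp
  have "alpha E V \<le> 3 * d * k"
  proof (rule alpha_le[OF finV])
    fix J assume "J \<subseteq> V" "independent E J"
    hence "card J \<le> card V" using finV card_mono by blast
    thus "card J \<le> 3 * d * k" using True dk by linarith
  qed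
  hence w: "alpha_width E {0} (\<lambda>_. V) \<le> 3 * d * k" unfolding alpha_width_def by simp
  have "alpha_tw V E \<le> alpha_width E {0} (\<lambda>_. V)"
    unfolding alpha_tw_def by (rule Least_le) (use tdc in blast)
  thus ?thesis using w by linarith
next
  case False
  have finV: "finite V" using assms(3) graph_def by auto
  obtain N0 A0 \<delta>0 where "rank_decomposition V N0 A0 \<delta>0"
    using rank_decomp_exists[OF finV] False by force
  hence ex: "\<exists>w N A \<delta>. rank_decomposition V N A \<delta> \<and> rank_width_of V E N A \<delta> = w" by blast
  have "\<exists>N A \<delta>. rank_decomposition V N A \<delta> \<and> rank_width_of V E N A \<delta> = rankwidth V E"
    unfolding rankwidth_def using ex by (rule LeastI_ex)
  then obtain N A \<delta> where rd: "rank_decomposition V N A \<delta>" and rwq: "rank_width_of V E N A \<delta> = rankwidth V E"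
    by blast
  interpret R: rdctx V E N A \<delta> d k
    by unfold_locales (use assms rd rwq in auto)
  have "alpha_tw V E \<le> alpha_width E N R.bag"
    unfolding alpha_tw_def by (rule Least_le) (use R.td in blast)
  thus ?thesis using R.width by linarith
qed

end
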